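(* Let $E$ be a pseudo effect algebra satisfying (RDP) and let $d:E\to\mathbb R$ be a subadditive mapping. Assume that for every $x\in E$ the set $$D(x):=\{d(x_1)+\cdots+d(x_n):\ x=x_1+\cdots+x_n,\ x_1,\ldots,x_n\in E,\ n\ge 1\}$$ is bounded above in $\mathbb R$. Then the mapping $m:E\to\mathbb R$ given by $m(x)=\sup D(x)$ is a signed measure on $E$.
   Context: A pseudo effect algebra is a partial algebra $(E;+,0,1)$ with a partial binary operation $+$ such that for all $a,b,c\in E$: (i) $a+b$ and $(a+b)+c$ exist iff $b+c$ and $a+(b+c)$ exist, and then $(a+b)+c=a+(b+c)$; (ii) there is exactly one $d$ and exactly one $e$ with $a+d=e+a=1$; (iii) if $a+b$ exists, there are $d,e\in E$ with $a+b=d+a=b+e$; (iv) if $1+a$ or $a+1$ exists then $a=0$. The order is $a\le b$ iff $a+c=b$ for some $c$. $E$ satisfies the Riesz Decomposition Property (RDP) if whenever $a_1+a_2=b_1+b_2$ there are $d_1,d_2,d_3,d_4\in E$ with $d_1+d_2=a_1$, $d_3+d_4=a_2$, $d_1+d_3=b_1$, $d_2+d_4=b_2$. A mapping $d:E\to\mathbb R$ is subadditive if $d(0)=0$ and $d(x+y)\le d(x)+d(y)$ whenever $x+y$ is defined. A signed measure on $E$ is a map $m:E\to\mathbb R$ with $m(a+b)=m(a)+m(b)$ whenever $a+b$ is defined. *)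

theory Defs
  imports Complex_Main
begin

text \<open>A pseudo effect algebra on the whole type 'a, given by a partial binary
operation pe (None = undefined), a zero z and a unit u.\<close>

definition pseudo_effect_algebra :: "('a \<Rightarrow> 'a \<Rightarrow> 'a option) \<Rightarrow> 'a \<Rightarrow> 'a \<Rightarrow> bool" where
  "pseudo_effect_algebra pe z u \<longleftrightarrow>
     (\<forall>a b c. (\<exists>ab. pe a b = Some ab \<and> pe ab c \<noteq> None) \<longleftrightarrow>
               (\<exists>bc. pe b c = Some bc \<and> pe a bc \<noteq> None)) \<and>
     (\<forall>a b c ab bc. pe a b = Some ab \<and> pe b c = Some bc \<and> pe ab c \<noteq> None \<and> pe a bc \<noteq> None
                 \<longrightarrow> pe ab c = pe a bc) \<and>
     (\<forall>a. (\<exists>!d. pe a d = Some u) \<and> (\<exists>!e. pe e a = Some u)) \<and>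
     (\<forall>a b s. pe a b = Some s \<longrightarrow> (\<exists>d e. pe d a = Some s \<and> pe b e = Some s)) \<and>
     (\<forall>a. pe u a \<noteq> None \<or> pe a u \<noteq> None \<longrightarrow> a = z)"

definition RDP :: "('a \<Rightarrow> 'a \<Rightarrow> 'a option) \<Rightarrow> bool" where
  "RDP pe \<longleftrightarrow>
     (\<forall>a1 a2 b1 b2 s. pe a1 a2 = Some s \<and> pe b1 b2 = Some s \<longrightarrow>
        (\<exists>d1 d2 d3 d4. pe d1 d2 = Some a1 \<and> pe d3 d4 = Some a2 \<and>
                       pe d1 d3 = Some b1 \<and> pe d2 d4 = Some b2))"

text \<open>The (right-bracketed) sum x1 + (x2 + (... + xn)) of a nonempty list;
None if undefined or if the list is empty.\<close>
fun psum :: "('a \<Rightarrow> 'a \<Rightarrow> 'a option) \<Rightarrow> 'a list \<Rightarrow> 'a option" where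
  "psum pe [] = None"
| "psum pe [x] = Some x"
| "psum pe (x # y # ys) = Option.bind (psum pe (y # ys)) (\<lambda>s. pe x s)"

definition subadditive :: "('a \<Rightarrow> 'a \<Rightarrow> 'a option) \<Rightarrow> 'a \<Rightarrow> ('a \<Rightarrow> real) \<Rightarrow> bool" where
  "subadditive pe z d \<longleftrightarrow> d z = 0 \<and> (\<forall>x y s. pe x y = Some s \<longrightarrow> d s \<le> d x + d y)"

definition signed_measure :: "('a \<Rightarrow> 'a \<Rightarrow> 'a option) \<Rightarrow> ('a \<Rightarrow> real) \<Rightarrow> bool" where
  "signed_measure pe m \<longleftrightarrow> (\<forall>a b s. pe a b = Some s \<longrightarrow> m s = m a + m b)"

definition Dset :: "('a \<Rightarrow> 'a \<Rightarrow> 'a option) \<Rightarrow> ('a \<Rightarrow> real) \<Rightarrow> 'a \<Rightarrow> real set" where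
  "Dset pe d x = {sum_list (map d xs) | xs. xs \<noteq> [] \<and> psum pe xs = Some x}"

end

theory Submission
  imports Defs
begin

lemma psum_cons_ne: "ys \<noteq> [] \<Longrightarrow> psum pe (x # ys) = Option.bind (psum pe ys) (pe x)"
  by (cases ys) auto

lemma psum_append:
  assumes A: "pseudo_effect_algebra pe z u"
  shows "psum pe (x # xs) = Some a \<Longrightarrow> psum pe ys = Some b \<Longrightarrow> ys \<noteq> [] \<Longrightarrow> pe a b = Some s
     \<Longrightarrow> psum pe ((x # xs) @ ys) = Some s"
proof (induction xs arbitrary: x a s)
  case Nil
  then show ?case by (simp add: psum_cons_ne)
next
  case (Cons y xs)
  from Cons.prems(1) obtain w where w: "psum pe (y # xs) = Some w" "pe x w = Some a"
    by (cases "psum pe (y # xs)") auto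
  have ex: "\<exists>ab. pe x w = Some ab \<and> pe ab b \<noteq> None" using w Cons.prems by auto
  have assoc0: "\<forall>a b c. (\<exists>ab. pe a b = Some ab \<and> pe ab c \<noteq> None) \<longleftrightarrow>
               (\<exists>bc. pe b c = Some bc \<and> pe a bc \<noteq> None)"
    using A unfolding pseudo_effect_algebra_def by (rule conjunct1)
  note assoc = assoc0[rule_format]
  from ex obtain bc where bc: "pe w b = Some bc" "pe x bc \<noteq> None"
    using assoc[of x w b] by blast
  have assoc20: "\<forall>a b c ab bc. pe a b = Some ab \<and> pe b c = Some bc \<and> pe ab c \<noteq> None \<and> pe a bc \<noteq> None
                 \<longrightarrow> pe ab c = pe a bc"
    using A unfolding pseudo_effect_algebra_def by (metis (no_types, lifting))
  have assoc2: "\<And>a b c ab bc. pe a b = Some ab \<Longrightarrow> pe b c = Some bc \<Longrightarrow> pe ab c \<noteq> None \<Longrightarrow> pe a bc \<noteq> None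
                 \<Longrightarrow> pe ab c = pe a bc" using assoc20 by blast
  have eq: "pe a b = pe x bc"
    using assoc2[of x w a b bc] w bc Cons.prems(4) by simp
  have "psum pe ((y # xs) @ ys) = Some bc" using Cons.IH[OF w(1) Cons.prems(2,3) bc(1)] .
  then show ?case using eq Cons.prems(4) by (simp add: psum_cons_ne)
qed

lemma sub_le: "subadditive pe z d \<Longrightarrow> pe x y = Some s \<Longrightarrow> d s \<le> d x + d y"
  unfolding subadditive_def by simp

lemma rdp_ex: "RDP pe \<Longrightarrow> pe a1 a2 = Some s \<Longrightarrow> pe b1 b2 = Some s \<Longrightarrow>
        (\<exists>d1 d2 d3 d4. pe d1 d2 = Some a1 \<and> pe d3 d4 = Some a2 \<and>
                       pe d1 d3 = Some b1 \<and> pe d2 d4 = Some b2)"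
  unfolding RDP_def by blast

lemma psum_split:
  assumes R: "RDP pe" and S: "subadditive pe z d"
  shows "psum pe (x # rest) = Some s \<Longrightarrow> pe a b = Some s \<Longrightarrow>
    \<exists>xs ys. xs \<noteq> [] \<and> ys \<noteq> [] \<and> psum pe xs = Some a \<and> psum pe ys = Some b \<and>
      sum_list (map d (x # rest)) \<le> sum_list (map d xs) + sum_list (map d ys)"
proof (induction rest arbitrary: x s a b)
  case Nil
  then have "d s \<le> d a + d b" using sub_le[OF S] by simp
  then show ?case using Nil by (intro exI[of _ "[a]"] exI[of _ "[b]"]) auto
next
  case (Cons r rest)
  from Cons.prems(1) obtain w where w: "psum pe (r # rest) = Some w" "pe x w = Some s"
    by (cases "psum pe (r # rest)") auto
  from rdp_ex[OF R w(2) Cons.prems(2)] obtain d1 d2 d3 d4 where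
    D: "pe d1 d2 = Some x" "pe d3 d4 = Some w" "pe d1 d3 = Some a" "pe d2 d4 = Some b"
    by blast
  from Cons.IH[OF w(1) D(2)] obtain xs ys where
    I: "xs \<noteq> []" "ys \<noteq> []" "psum pe xs = Some d3" "psum pe ys = Some d4"
       "sum_list (map d (r # rest)) \<le> sum_list (map d xs) + sum_list (map d ys)" by blast
  have dx: "d x \<le> d d1 + d d2" using sub_le[OF S D(1)] .
  show ?case
    apply (rule exI[of _ "d1 # xs"], rule exI[of _ "d2 # ys"])
    using I dx D by (simp add: psum_cons_ne)
qed

lemma Dset_mem: "xs \<noteq> [] \<Longrightarrow> psum pe xs = Some x \<Longrightarrow> sum_list (map d xs) \<in> Dset pe d x"
  unfolding Dset_def by blast

lemma Dset_elim: "t \<in> Dset pe d x \<Longrightarrow> \<exists>xs. xs \<noteq> [] \<and> psum pe xs = Some x \<and> t = sum_list (map d xs)"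
  unfolding Dset_def by blast

lemma Dset_ne: "Dset pe d x \<noteq> {}"
  unfolding Dset_def by (auto intro!: exI[of _ "[x]"])

theorem proposition3p1:
  fixes pe :: "'a \<Rightarrow> 'a \<Rightarrow> 'a option" and z u :: 'a and d :: "'a \<Rightarrow> real"
  assumes "pseudo_effect_algebra pe z u"
    and "RDP pe"
    and "subadditive pe z d"
    and "\<forall>x. bdd_above (Dset pe d x)"
  shows "signed_measure pe (\<lambda>x. Sup (Dset pe d x))"
  unfolding signed_measure_def
proof (intro allI impI)
  fix a b s assume ab: "pe a b = Some s"
  have bdd: "\<And>x. bdd_above (Dset pe d x)" using assms(4) by simp
  have ge: "Sup (Dset pe d a) + Sup (Dset pe d b) \<le> Sup (Dset pe d s)"
  proof -
    have pair: "u + v \<le> Sup (Dset pe d s)" if ua: "u \<in> Dset pe d a" and vb: "v \<in> Dset pe d b" for u v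
    proof -
      obtain xs where xs: "xs \<noteq> []" "psum pe xs = Some a" "u = sum_list (map d xs)"
        using Dset_elim[OF ua] by blast
      obtain ys where ys: "ys \<noteq> []" "psum pe ys = Some b" "v = sum_list (map d ys)"
        using Dset_elim[OF vb] by blast
      obtain x xs' where xx: "xs = x # xs'" using xs(1) by (cases xs) auto
      have "psum pe (xs @ ys) = Some s"
        using psum_append[OF assms(1), of x xs' a ys b s] xs ys ab xx by simp
      then have "sum_list (map d (xs @ ys)) \<in> Dset pe d s" using xs by (intro Dset_mem) auto
      then have "u + v \<in> Dset pe d s" using xs ys by simp
      then show ?thesis by (rule cSup_upper[OF _ bdd])
    qed
    have "\<And>u. u \<in> Dset pe d a \<Longrightarrow> u \<le> Sup (Dset pe d s) - Sup (Dset pe d b)"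
    proof -
      fix u assume u: "u \<in> Dset pe d a"
      have "Sup (Dset pe d b) \<le> Sup (Dset pe d s) - u"
        by (rule cSup_least[OF Dset_ne]) (drule pair[OF u], linarith)
      then show "u \<le> Sup (Dset pe d s) - Sup (Dset pe d b)" by linarith
    qed
    then have "Sup (Dset pe d a) \<le> Sup (Dset pe d s) - Sup (Dset pe d b)"
      by (rule cSup_least[OF Dset_ne])
    then show ?thesis by linarith
  qed
  have le: "Sup (Dset pe d s) \<le> Sup (Dset pe d a) + Sup (Dset pe d b)"
  proof (rule cSup_least[OF Dset_ne])
    fix t assume "t \<in> Dset pe d s"
    then obtain zs where zs: "zs \<noteq> []" "psum pe zs = Some s" "t = sum_list (map d zs)"
      by (blast dest: Dset_elim)
    obtain x rest where xx: "zs = x # rest" using zs(1) by (cases zs) auto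
    have ps: "psum pe (x # rest) = Some s" using zs(2) xx by simp
    obtain xs ys where
      I: "xs \<noteq> []" "ys \<noteq> []" "psum pe xs = Some a" "psum pe ys = Some b"
       "sum_list (map d (x # rest)) \<le> sum_list (map d xs) + sum_list (map d ys)"
      using psum_split[OF assms(2,3) ps ab] by blast
    have "sum_list (map d xs) \<le> Sup (Dset pe d a)"
      by (rule cSup_upper[OF Dset_mem[OF I(1,3)] bdd])
    moreover have "sum_list (map d ys) \<le> Sup (Dset pe d b)"
      by (rule cSup_upper[OF Dset_mem[OF I(2,4)] bdd])
    moreover have "t = sum_list (map d (x # rest))" using zs(3) xx by simp
    ultimately show "t \<le> Sup (Dset pe d a) + Sup (Dset pe d b)" using I(5) by linarith
  qed
  show "Sup (Dset pe d s) = Sup (Dset pe d a) + Sup (Dset pe d b)" using ge le by linarith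
qed

end
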